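(* Let $P_{\mathbf{x}}$ be the uniform distribution on the unit ball $\mathcal{X}=\{\mathbf{x}\in\mathbb{R}^d:\|\mathbf{x}\|\le1\}$, hypotheses $\mathbf{x}\mapsto\mathrm{sign}(\langle\mathbf{w},\mathbf{x}\rangle)$ for unit vectors $\mathbf{w}$, and confidence function $g(\mathbf{w},\mathbf{x})=|\langle\mathbf{w},\mathbf{x}\rangle|$. Let the TBAL algorithm run for $k$ rounds, with $\hat{\mathbf{w}}_i,\hat t_i$ the ERM solution and auto-labeling margin threshold at round $i$, and let $\mathcal{X}^{(i)}$ be the unlabeled region at the beginning of round $i$. Then \[ \sum_{i=1}^k\mathbb{P}\big(\mathcal{X}^{(i)}(\hat{\mathbf{w}}_i,\hat t_i)\big)\ge1-\min_i\hat t_i\sqrt{4d/\pi}. \]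
   Context: $\mathcal{X}^{(i)}=\{\mathbf{x}\in\mathcal{X}:|\langle\hat{\mathbf{w}}_j,\mathbf{x}\rangle|<\hat t_j\ \forall j<i\}$ and, for a region $\mathcal{S}$, $\mathcal{S}(\mathbf{w},t)=\{\mathbf{x}\in\mathcal{S}:|\langle\mathbf{w},\mathbf{x}\rangle|\ge t\}$; $\mathbb{P}$ denotes probability mass under $P_{\mathbf{x}}$. In the TBAL algorithm, in each round $i$ a unit vector $\hat{\mathbf{w}}_i$ is obtained by empirical risk minimization on oracle-labeled data and a threshold $\hat t_i\in[0,1]$ is selected using validation data; points of the remaining region with $|\langle\hat{\mathbf{w}}_i,\mathbf{x}\rangle|\ge\hat t_i$ are auto-labeled and removed, so the regions $\mathcal{X}^{(i)}(\hat{\mathbf{w}}_i,\hat t_i)$ are the disjoint auto-labeled regions of the successive rounds. *)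

theory Defs
  imports "HOL-Analysis.Analysis"
begin

text \<open>Instance space: the closed unit ball of R^d (d = CARD('n)).\<close>
definition unit_ball :: "(real^'n) set" where
  "unit_ball = cball 0 1"

definition Px :: "(real^'n) measure" where
  "Px = uniform_measure lborel unit_ball"

definition margin_region :: "(real^'n) set \<Rightarrow> real^'n \<Rightarrow> real \<Rightarrow> (real^'n) set" where
  "margin_region S w t = {x \<in> S. \<bar>w \<bullet> x\<bar> \<ge> t}"

text \<open>X^(i) = {x in X. |<w_j,x>| < t_j for all 1 <= j < i} (rounds indexed from 1).\<close>
definition remaining_region :: "(nat \<Rightarrow> real^'n) \<Rightarrow> (nat \<Rightarrow> real) \<Rightarrow> nat \<Rightarrow> (real^'n) set" where
  "remaining_region w t i = {x \<in> unit_ball. \<forall>j\<in>{1..<i}. \<bar>w j \<bullet> x\<bar> < t j}"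

end

theory Submission
  imports Defs
begin


typedef ('a::finite) wo = "UNIV :: 'a set" by simp

instantiation wo :: (finite) linorder
begin
definition less_eq_wo :: "'a wo \<Rightarrow> 'a wo \<Rightarrow> bool" where
  "less_eq_wo x y \<longleftrightarrow> to_nat_on (UNIV::'a set) (Rep_wo x) \<le> to_nat_on (UNIV::'a set) (Rep_wo y)"
definition less_wo :: "'a wo \<Rightarrow> 'a wo \<Rightarrow> bool" where
  "less_wo x y \<longleftrightarrow> to_nat_on (UNIV::'a set) (Rep_wo x) < to_nat_on (UNIV::'a set) (Rep_wo y)"
instance
proof
  have inj: "inj (to_nat_on (UNIV::'a set))"
    by (simp add: countable_finite inj_on_to_nat_on)
  fix x y z :: "'a wo"
  show "(x < y) = (x \<le> y \<and> \<not> y \<le> x)" by (auto simp: less_eq_wo_def less_wo_def)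
  show "x \<le> x" by (simp add: less_eq_wo_def)
  show "x \<le> y \<Longrightarrow> y \<le> z \<Longrightarrow> x \<le> z" by (auto simp: less_eq_wo_def)
  show "x \<le> y \<Longrightarrow> y \<le> x \<Longrightarrow> x = y"
    using inj by (auto simp: less_eq_wo_def Rep_wo_inject dest: injD)
  show "x \<le> y \<or> y \<le> x" by (auto simp: less_eq_wo_def)
qed
end

instance wo :: (finite) finite
proof
  have "(UNIV :: 'a wo set) = Abs_wo ` UNIV"
    by (metis Rep_wo_inverse surj_def)
  then show "finite (UNIV :: 'a wo set)" by (metis finite finite_imageI)
qed

instance wo :: (finite) wellorder
proof
  fix P :: "'a wo \<Rightarrow> bool" and a :: "'a wo"
  assume H: "\<And>x. (\<And>y. y < x \<Longrightarrow> P y) \<Longrightarrow> P x"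
  have "\<forall>x. to_nat_on UNIV (Rep_wo x) = n \<longrightarrow> P x" for n
  proof (induction n rule: less_induct)
    case (less n)
    then show ?case using H by (auto simp: less_wo_def)
  qed
  then show "P a" by blast
qed

lemma prod_Basis_vec:
  "(\<Prod>b\<in>(Basis::(real^'n) set). x \<bullet> b) = (\<Prod>i\<in>UNIV. x $ i)"
proof -
  have B: "(Basis::(real^'n) set) = (\<lambda>i. axis i 1) ` UNIV"
    by (auto simp: Basis_vec_def)
  have "inj (\<lambda>i::'n. axis i (1::real))"
    by (auto simp: inj_on_def axis_eq_axis)
  then show ?thesis unfolding B
    by (subst prod.reindex) (auto simp: inner_axis)
qed

lemma relabel_lborel:
  fixes h :: "'b::finite \<Rightarrow> 'a::finite"
  assumes "bij h"
  shows "distr (lborel :: (real^'a) measure) borel (\<lambda>x. \<chi> i. x $ h i) = (lborel :: (real^'b) measure)"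
proof (rule lborel_eqI[symmetric])
  let ?g = "inv h"
  have hg: "h (?g j) = j" for j using assms by (simp add: bij_is_surj surj_f_inv_f)
  have gh: "?g (h j) = j" for j using assms by (simp add: bij_is_inj)
  have meas[measurable]: "(\<lambda>x::real^'a. \<chi> i. x $ h i) \<in> borel \<rightarrow>\<^sub>M (borel :: (real^'b) measure)"
    by (intro borel_measurable_continuous_onI continuous_intros) 
  fix l u :: "real^'b"
  assume le: "\<And>b. b \<in> Basis \<Longrightarrow> l \<bullet> b \<le> u \<bullet> b"
  define l' :: "real^'a" where "l' = (\<chi> j. l $ ?g j)"
  define u' :: "real^'a" where "u' = (\<chi> j. u $ ?g j)"
  have pre: "(\<lambda>x::real^'a. \<chi> i. x $ h i) -` box l u = box l' u'"
  proof (intro set_eqI iffI)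
    fix x :: "real^'a"
    assume "x \<in> (\<lambda>x::real^'a. \<chi> i. x $ h i) -` box l u"
    then have A: "l $ i < x $ h i \<and> x $ h i < u $ i" for i by (simp add: mem_box_cart)
    show "x \<in> box l' u'" unfolding mem_box_cart l'_def u'_def
      using A[of "?g j" for j] by (simp add: hg)
  next
    fix x :: "real^'a"
    assume "x \<in> box l' u'"
    then have A: "l $ ?g j < x $ j \<and> x $ j < u $ ?g j" for j by (simp add: mem_box_cart l'_def u'_def)
    show "x \<in> (\<lambda>x::real^'a. \<chi> i. x $ h i) -` box l u"
      using A[of "h i" for i] by (simp add: mem_box_cart gh)
  qed
  have le0: "l $ i \<le> u $ i" for i
    using le[of "axis i 1"] by (simp add: cart_eq_inner_axis)
  have le': "\<forall>b\<in>Basis. l' \<bullet> b \<le> u' \<bullet> b"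
    by (auto simp: Basis_vec_def l'_def u'_def cart_eq_inner_axis[symmetric] le0)
  have "(\<Prod>b\<in>(Basis::(real^'a) set). (u' - l') \<bullet> b) = (\<Prod>b\<in>(Basis::(real^'b) set). (u - l) \<bullet> b)"
  proof -
    have bg: "bij ?g" using assms by (simp add: bij_imp_bij_inv)
    have "(\<Prod>i\<in>UNIV. (u' - l') $ i) = (\<Prod>j\<in>UNIV. (\<lambda>i. (u - l) $ i) (?g j))"
      by (simp add: l'_def u'_def)
    also have "\<dots> = (\<Prod>i\<in>UNIV. (u - l) $ i)"
      using prod.reindex_bij_betw[OF bg, of "\<lambda>i. (u - l) $ i"] by simp
    finally show ?thesis unfolding prod_Basis_vec .
  qed
  then show "emeasure (distr lborel borel (\<lambda>x::real^'a. \<chi> i. x $ h i)) (box l u) = (\<Prod>b\<in>Basis. (u - l) \<bullet> b)"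
    using le' by (simp add: emeasure_distr pre emeasure_lborel_box_eq)
qed simp

lemma relabel_inner:
  fixes h :: "'b::finite \<Rightarrow> 'a::finite"
  assumes "bij h"
  shows "(\<chi> i. x $ h i) \<bullet> (\<chi> i. y $ h i) = (x::real^'a) \<bullet> y"
  unfolding inner_vec_def
  using sum.reindex_bij_betw[OF assms, of "\<lambda>i. x $ i \<bullet> y $ i"] by simp

lemma relabel_linear: "linear (\<lambda>x::real^'a. (\<chi> i. x $ h i) :: real^'b)"
  by (auto simp: linear_iff vec_eq_iff)

lemma orth_vimage_measure:
  fixes f :: "real^'n \<Rightarrow> real^'n"
  assumes f: "orthogonal_transformation f" and S: "S \<in> sets borel" and bS: "bounded S"
  shows "measure lborel (f -` S) = measure lborel S"
proof -
  define \<phi> :: "real^'n \<Rightarrow> real^('n wo)" where "\<phi> x = (\<chi> i. x $ Rep_wo i)" for x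
  define \<psi> :: "real^('n wo) \<Rightarrow> real^'n" where "\<psi> y = (\<chi> j. y $ Abs_wo j)" for y
  have bR: "bij (Rep_wo :: 'n wo \<Rightarrow> 'n)"
    by (rule bij_betwI[where g=Abs_wo]) (auto simp: Abs_wo_inverse Rep_wo_inverse)
  have bA: "bij (Abs_wo :: 'n \<Rightarrow> 'n wo)"
    by (rule bij_betwI[where g=Rep_wo]) (auto simp: Abs_wo_inverse Rep_wo_inverse)
  have d\<phi>: "distr lborel borel \<phi> = lborel"
    unfolding \<phi>_def[abs_def] by (rule relabel_lborel[OF bR])
  have d\<psi>: "distr lborel borel \<psi> = lborel"
    unfolding \<psi>_def[abs_def] by (rule relabel_lborel[OF bA])
  have m\<phi>[measurable]: "\<phi> \<in> borel \<rightarrow>\<^sub>M borel"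
    unfolding \<phi>_def[abs_def] by (intro borel_measurable_continuous_onI continuous_intros)
  have m\<psi>[measurable]: "\<psi> \<in> borel \<rightarrow>\<^sub>M borel"
    unfolding \<psi>_def[abs_def] by (intro borel_measurable_continuous_onI continuous_intros)
  have \<psi>\<phi>: "\<psi> (\<phi> x) = x" for x
    by (simp add: \<phi>_def \<psi>_def vec_eq_iff Abs_wo_inverse)
  have \<phi>\<psi>: "\<phi> (\<psi> y) = y" for y
    by (simp add: \<phi>_def \<psi>_def vec_eq_iff Rep_wo_inverse)
  have n\<psi>: "norm (\<psi> y) = norm y" for y
    unfolding norm_eq_sqrt_inner \<psi>_def by (simp add: relabel_inner[OF bA])
  define g where "g = \<phi> \<circ> f \<circ> \<psi>"
  have lg: "linear g" unfolding g_def \<phi>_def[abs_def] \<psi>_def[abs_def]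
    using f by (intro linear_compose relabel_linear) (auto simp: orthogonal_transformation_def)
  have og: "orthogonal_transformation g"
    unfolding orthogonal_transformation_def
  proof (intro conjI allI lg)
    fix v w
    show "g v \<bullet> g w = v \<bullet> w"
      using f unfolding g_def \<phi>_def \<psi>_def
      by (simp add: relabel_inner[OF bR] relabel_inner[OF bA] orthogonal_transformation_def)
  qed
  have fg: "f x = \<psi> (g (\<phi> x))" for x by (simp add: g_def \<psi>\<phi> \<phi>\<psi>)
  define Y where "Y = \<psi> -` S"
  have Yb: "Y \<in> sets borel" unfolding Y_def by (rule measurable_sets_borel[OF m\<psi> S])
  have Ybd: "bounded Y"
  proof -
    obtain B where "\<forall>x\<in>S. norm x \<le> B" using bS bounded_iff by blast
    then have "\<forall>y\<in>Y. norm y \<le> B" unfolding Y_def by (metis n\<psi> vimageE)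
    then show ?thesis using bounded_iff by blast
  qed
  have YL: "Y \<in> lmeasurable"
    using Yb Ybd by (simp add: bounded_set_imp_lmeasurable)
  have bg: "bij g" using og by (rule orthogonal_transformation_bij)
  have gY: "g -` Y = inv g ` Y"
    using bg by (simp add: bij_vimage_eq_inv_image)
  have gYb: "g -` Y \<in> sets borel"
  proof -
    have "g \<in> borel \<rightarrow>\<^sub>M borel"
      using lg by (intro borel_measurable_continuous_onI linear_continuous_on) (simp add: linear_conv_bounded_linear)
    then show ?thesis by (rule measurable_sets_borel[OF _ Yb])
  qed
  have "measure lborel (g -` Y) = measure lborel Y"
  proof -
    have "measure lebesgue (inv g ` Y) = measure lebesgue Y"
      using measure_orthogonal_image[OF orthogonal_transformation_inv[OF og] YL] .
    then show ?thesis using gYb Yb gY by (simp add: measure_completion)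
  qed
  moreover have "f -` S = \<phi> -` (g -` Y)"
    by (auto simp: Y_def fg)
  moreover have "measure lborel (\<phi> -` (g -` Y)) = measure lborel (g -` Y)"
    using gYb by (subst d\<phi>[symmetric]) (simp add: measure_distr)
  moreover have "measure lborel (\<psi> -` S) = measure lborel S"
    using S by (subst d\<psi>[symmetric]) (simp add: measure_distr)
  ultimately show ?thesis by (simp add: Y_def)
qed

lemma slab_axis:
  fixes k :: "'n::finite" and t :: real
  assumes t: "0 \<le> t"
  shows "emeasure lborel {x::real^'n. norm x \<le> 1 \<and> \<bar>x $ k\<bar> < t}
           \<le> ennreal (2 * t * unit_ball_vol (real (CARD('n) - 1)))"
proof -
  interpret product_sigma_finite "\<lambda>_::real^'n. (lborel::real measure)" by standard
  define e :: "real^'n" where "e = axis k 1"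
  define A where "A = (Basis::(real^'n) set) - {e}"
  have eB: "e \<in> Basis" by (simp add: e_def)
  have BA: "(Basis::(real^'n) set) = insert e A" using eB by (auto simp: A_def)
  have fA: "finite A" "e \<notin> A" by (auto simp: A_def)
  have cA: "card A = CARD('n) - 1"
    using eB by (simp add: A_def card_Diff_singleton)
  define X where "X = {x::real^'n. norm x \<le> 1 \<and> \<bar>x $ k\<bar> < t}"
  have Xb: "X \<in> sets borel" unfolding X_def by measurable
  let ?M = "Pi\<^sub>M (insert e A) (\<lambda>_. lborel::real measure)"
  let ?F = "\<lambda>f. \<Sum>b\<in>insert e A. f b *\<^sub>R b :: real^'n"
  have Fm: "?F \<in> ?M \<rightarrow>\<^sub>M borel" by measurable
  have "emeasure lborel X = emeasure ?M (?F -` X \<inter> space ?M)"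
    using Fm Xb by (subst lborel_eq) (simp add: BA emeasure_distr)
  also have "\<dots> \<le> emeasure ?M ({f. \<bar>f e\<bar> < t \<and> sqrt (\<Sum>b\<in>A. (f b)\<^sup>2) \<le> 1} \<inter> space ?M)"
  proof (rule emeasure_mono)
    show "?F -` X \<inter> space ?M \<subseteq> {f. \<bar>f e\<bar> < t \<and> sqrt (\<Sum>b\<in>A. (f b)\<^sup>2) \<le> 1} \<inter> space ?M"
    proof safe
      fix f assume fX: "?F f \<in> X" and fs: "f \<in> space ?M"
      have inn: "?F f \<bullet> b = f b" if "b \<in> insert e A" for b
        using that by (simp add: inner_sum_left inner_Basis BA[symmetric] if_distrib cong: if_cong)
      have "?F f $ k = f e" using inn[of e] by (simp add: cart_eq_inner_axis e_def)
      then show "\<bar>f e\<bar> < t" using fX by (simp add: X_def)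
      have "norm (?F f) ^ 2 = (\<Sum>b\<in>insert e A. (f b)\<^sup>2)"
        unfolding power2_norm_eq_inner by (simp add: inner_sum_right inn power2_eq_square)
      also have "\<dots> = (f e)\<^sup>2 + (\<Sum>b\<in>A. (f b)\<^sup>2)" using fA by simp
      finally have "(\<Sum>b\<in>A. (f b)\<^sup>2) \<le> 1"
        using fX by (simp add: X_def) (smt (verit) norm_ge_zero power_le_one zero_le_power2)
      then show "sqrt (\<Sum>b\<in>A. (f b)\<^sup>2) \<le> 1" by simp
    qed
  qed measurable
  also have "\<dots> = (\<integral>\<^sup>+ f. indicator ({f. \<bar>f e\<bar> < t \<and> sqrt (\<Sum>b\<in>A. (f b)\<^sup>2) \<le> 1} \<inter> space ?M) f \<partial>?M)"
    by (subst nn_integral_indicator) auto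
  also have "\<dots> = (\<integral>\<^sup>+ y. \<integral>\<^sup>+ x. indicator ({f. \<bar>f e\<bar> < t \<and> sqrt (\<Sum>b\<in>A. (f b)\<^sup>2) \<le> 1} \<inter> space ?M) (x(e := y))
           \<partial>Pi\<^sub>M A (\<lambda>_. lborel) \<partial>lborel)"
    using fA by (subst product_nn_integral_insert_rev) auto
  also have "\<dots> = (\<integral>\<^sup>+ y. \<integral>\<^sup>+ x. indicator {-t<..<t} y * indicator ({f. sqrt (\<Sum>b\<in>A. (f b)\<^sup>2) \<le> 1} \<inter> space (Pi\<^sub>M A (\<lambda>_. lborel))) x
           \<partial>Pi\<^sub>M A (\<lambda>_. lborel) \<partial>lborel)"
  proof (intro nn_integral_cong, goal_cases)
    case (1 y x)
    have "(\<Sum>b\<in>A. (if b = e then y else x b)\<^sup>2) = (\<Sum>b\<in>A. (x b)\<^sup>2)"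
      using fA by (intro sum.cong) auto
    then show ?case using 1 fA
      by (auto simp: indicator_def PiE_def space_PiM abs_less_iff extensional_def)
  qed
  also have "\<dots> = (\<integral>\<^sup>+ y. indicator {-t<..<t} y * (\<integral>\<^sup>+ x. indicator ({f. sqrt (\<Sum>b\<in>A. (f b)\<^sup>2) \<le> 1} \<inter> space (Pi\<^sub>M A (\<lambda>_. lborel))) x
           \<partial>Pi\<^sub>M A (\<lambda>_. lborel)) \<partial>lborel)"
    by (subst nn_integral_cmult) auto
  also have "\<dots> = (\<integral>\<^sup>+ y. indicator {-t<..<t} y * emeasure (Pi\<^sub>M A (\<lambda>_. lborel))
            ({f. sqrt (\<Sum>b\<in>A. (f b)\<^sup>2) \<le> 1} \<inter> space (Pi\<^sub>M A (\<lambda>_. lborel))) \<partial>lborel)"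
  proof (rule nn_integral_cong)
    fix y :: real
    have "{f. sqrt (\<Sum>b\<in>A. (f b)\<^sup>2) \<le> 1} \<inter> space (Pi\<^sub>M A (\<lambda>_. lborel)) \<in> sets (Pi\<^sub>M A (\<lambda>_. lborel))"
      by measurable
    then show "indicator {-t<..<t} y * (\<integral>\<^sup>+ x. indicator ({f. sqrt (\<Sum>b\<in>A. (f b)\<^sup>2) \<le> 1} \<inter> space (Pi\<^sub>M A (\<lambda>_. lborel))) x
           \<partial>Pi\<^sub>M A (\<lambda>_. lborel)) = indicator {-t<..<t} y * emeasure (Pi\<^sub>M A (\<lambda>_. lborel))
            ({f. sqrt (\<Sum>b\<in>A. (f b)\<^sup>2) \<le> 1} \<inter> space (Pi\<^sub>M A (\<lambda>_. lborel)))"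
      by (simp only: nn_integral_indicator)
  qed
  also have "\<dots> = (\<integral>\<^sup>+ y. indicator {-t<..<t} y * ennreal (unit_ball_vol (real (card A))) \<partial>lborel)"
    using emeasure_cball_aux[OF fA(1), of 1] by simp
  also have "\<dots> = ennreal (unit_ball_vol (real (card A))) * emeasure lborel {-t<..<t}"
    by (subst nn_integral_cmult_indicator[symmetric]) (auto simp: mult.commute)
  also have "\<dots> = ennreal (2 * t * unit_ball_vol (real (CARD('n) - 1)))"
    using t by (simp add: cA ennreal_mult'[symmetric] mult.commute)
  finally show ?thesis unfolding X_def .
qed

lemma gamma_ratio:
  fixes d :: real
  assumes d: "d \<ge> 1"
  shows "Gamma (d/2 + 1) \<le> sqrt d * Gamma ((d+1)/2)"
proof -
  define a where "a = (d+1)/2"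
  have a: "a > 0" "a \<le> d" using d by (auto simp: a_def)
  have c0: "(ln \<circ> Gamma) ((1 - 1/2) *\<^sub>R a + (1/2) *\<^sub>R (a+1)) \<le> (1 - 1/2) * (ln \<circ> Gamma) a + (1/2) * (ln \<circ> Gamma) (a+1)"
    by (rule convex_onD[OF log_convex_Gamma_real]) (use a in auto)
  have eq: "(1 - 1/2) *\<^sub>R a + (1/2) *\<^sub>R (a+1) = d/2 + 1" by (simp add: a_def field_simps)
  have c: "ln (Gamma (d/2+1)) \<le> (1/2) * ln (Gamma a) + (1/2) * ln (Gamma (a+1))"
    using c0 unfolding eq by simp
  have gp: "Gamma (a+1) = a * Gamma a"
    using a by (intro Gamma_plus1) (auto dest: nonpos_Ints_nonpos)
  have ga: "Gamma a > 0" using a by (simp add: Gamma_real_pos)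
  have l0: "ln (a * Gamma a) = ln a + ln (Gamma a)" by (rule ln_mult_pos) (use a ga in auto)
  have l: "ln (Gamma (a+1)) = ln a + ln (Gamma a)" unfolding gp by (rule l0)
  have "ln (Gamma (d/2+1)) \<le> ln (Gamma a) + ln a / 2"
    using c l by linarith
  also have "\<dots> = ln (Gamma a * sqrt a)"
    using a ga by (simp add: ln_mult_pos ln_sqrt)
  finally have "Gamma (d/2+1) \<le> Gamma a * sqrt a"
    using a ga d by (subst (asm) ln_le_cancel_iff) (auto intro: Gamma_real_pos)
  also have "\<dots> \<le> Gamma a * sqrt d" using a ga by (intro mult_left_mono) auto
  finally show ?thesis by (simp add: a_def mult.commute)
qed


lemma ubv_ratio:
  fixes d :: nat
  assumes d: "d \<ge> 1"
  shows "2 * unit_ball_vol (real (d - 1)) \<le> sqrt (4 * real d / pi) * unit_ball_vol (real d)"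
proof -
  define G1 where "G1 = Gamma ((real d + 1)/2)"
  define G2 where "G2 = Gamma (real d/2 + 1)"
  have g1: "G1 > 0" unfolding G1_def by (intro Gamma_real_pos) auto
  have g2: "G2 > 0" unfolding G2_def by (intro Gamma_real_pos) auto
  have g12: "G2 \<le> sqrt d * G1" unfolding G1_def G2_def using gamma_ratio[of "real d"] d by simp
  have sd: "sqrt (real d) > 0" using d by simp
  have pp: "pi powr (real d / 2 - 1/2) = pi powr (real d / 2) / sqrt pi"
    by (simp add: powr_diff powr_half_sqrt)
  have e1: "real (d - 1) / 2 + 1 = (real d + 1)/2" using d by (simp add: of_nat_diff field_simps)
  have e2: "real (d - 1) / 2 = real d / 2 - 1/2" using d by (simp add: of_nat_diff field_simps)
  have "2 * unit_ball_vol (real (d - 1)) = 2 * (pi powr (real d / 2) / sqrt pi) / G1"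
    unfolding unit_ball_vol_def G1_def e1 e2 pp by (simp add: add_divide_distrib add.commute)
  also have "\<dots> = (2 * sqrt d / sqrt pi * pi powr (real d / 2)) / (sqrt d * G1)"
    using sd by (simp add: field_simps)
  also have "\<dots> \<le> (2 * sqrt d / sqrt pi * pi powr (real d / 2)) / G2"
    using g1 g2 g12 sd by (intro divide_left_mono) auto
  also have "\<dots> = sqrt (4 * real d / pi) * unit_ball_vol (real d)"
    by (simp add: unit_ball_vol_def G2_def real_sqrt_mult real_sqrt_divide)
  finally show ?thesis .
qed

lemma slab_measure:
  fixes w :: "real^'n" and t :: real
  assumes w: "norm w = 1" and t: "0 \<le> t"
  shows "measure lborel {x. norm x \<le> 1 \<and> \<bar>w \<bullet> x\<bar> < t} \<le> 2 * t * unit_ball_vol (real (CARD('n) - 1))"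
proof -
  define k :: 'n where "k = undefined"
  obtain f :: "real^'n \<Rightarrow> real^'n" where f: "orthogonal_transformation f" "f (axis k (1::real)) = w"
    using orthogonal_transformation_exists_1[OF norm_axis_1 w] by blast
  define h where "h = inv f"
  have h: "orthogonal_transformation h" unfolding h_def by (rule orthogonal_transformation_inv[OF f(1)])
  have hw: "h w = axis k (1::real)" unfolding h_def f(2)[symmetric]
    by (rule inv_f_f[OF orthogonal_transformation_inj[OF f(1)]])
  have hx: "h x $ k = w \<bullet> x" for x
  proof -
    have "h x $ k = h x \<bullet> h w" unfolding hw by (rule cart_eq_inner_axis)
    also have "\<dots> = x \<bullet> w" using h by (simp add: orthogonal_transformation_def)
    also have "\<dots> = w \<bullet> x" by (rule inner_commute)
    finally show ?thesis .
  qed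
  define S where "S = {y::real^'n. norm y \<le> 1 \<and> \<bar>y $ k\<bar> < t}"
  have eq: "{x. norm x \<le> 1 \<and> \<bar>w \<bullet> x\<bar> < t} = h -` S"
  proof (rule set_eqI)
    fix x
    show "x \<in> {x. norm x \<le> 1 \<and> \<bar>w \<bullet> x\<bar> < t} \<longleftrightarrow> x \<in> h -` S"
      unfolding S_def using hx[of x] orthogonal_transformation_norm[OF h, of x] by simp
  qed
  have Sb: "S \<in> sets borel" unfolding S_def by measurable
  have Sbd: "bounded S" 
  proof (rule bounded_subset[OF bounded_cball[of 0 1]])
    show "S \<subseteq> cball 0 1" unfolding S_def by (auto simp: mem_cball_0)
  qed
  have "measure lborel (h -` S) = measure lborel S" by (rule orth_vimage_measure[OF h Sb Sbd])
  also have "measure lborel S \<le> 2 * t * unit_ball_vol (real (CARD('n) - 1))"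
  proof -
    have "emeasure lborel S \<le> ennreal (2 * t * unit_ball_vol (real (CARD('n) - 1)))"
      unfolding S_def by (rule slab_axis[OF t])
    then have "enn2real (emeasure lborel S) \<le> enn2real (ennreal (2 * t * unit_ball_vol (real (CARD('n) - 1))))"
      by (intro enn2real_mono) auto
    then show ?thesis using t by (simp add: measure_def)
  qed
  finally show ?thesis using eq by simp
qed

lemma Px_measure:
  fixes B :: "(real^'n) set"
  assumes B: "B \<in> sets borel"
  shows "measure (Px :: (real^'n) measure) B = measure lborel (B \<inter> cball 0 1) / unit_ball_vol (real CARD('n))"
proof -
  have V: "emeasure lborel (cball (0::real^'n) 1) = ennreal (unit_ball_vol (real CARD('n)))"
    using emeasure_cball[where c="0::real^'n" and r=1] by simp
  have pos: "unit_ball_vol (real CARD('n)) > 0" by simp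
  have fin: "emeasure lborel (cball (0::real^'n) 1 \<inter> B) = ennreal (measure lborel (B \<inter> cball 0 1))"
  proof -
    have "emeasure lborel (cball (0::real^'n) 1 \<inter> B) \<le> emeasure lborel (cball (0::real^'n) 1)"
      by (intro emeasure_mono) auto
    then have "emeasure lborel (cball (0::real^'n) 1 \<inter> B) \<noteq> \<infinity>" using V by (auto simp: top_unique)
    then show ?thesis by (simp add: emeasure_eq_ennreal_measure Int_commute)
  qed
  have "emeasure (Px :: (real^'n) measure) B = emeasure lborel (cball (0::real^'n) 1 \<inter> B) / emeasure lborel (cball (0::real^'n) 1)"
    unfolding Px_def unit_ball_def using B by (subst emeasure_uniform_measure) auto
  also have "\<dots> = ennreal (measure lborel (B \<inter> cball 0 1) / unit_ball_vol (real CARD('n)))"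
    using pos by (simp add: fin V divide_ennreal)
  finally show ?thesis by (simp add: measure_def)
qed

theorem lemma8:
  fixes w :: "nat \<Rightarrow> real^'n" and t :: "nat \<Rightarrow> real" and k :: nat
  assumes "k \<ge> 1"
    and "\<forall>i\<in>{1..k}. norm (w i) = 1"
    and "\<forall>i\<in>{1..k}. 0 \<le> t i \<and> t i \<le> 1"
  shows "(\<Sum>i=1..k. measure Px (margin_region (remaining_region w t i) (w i) (t i)))
           \<ge> 1 - Min (t ` {1..k}) * sqrt (4 * real CARD('n) / pi)"
proof -
  note k1 = assms(1)
  have ne: "t ` {1..k} \<noteq> {}" using k1 by auto
  obtain m where m: "m \<in> {1..k}" "t m = Min (t ` {1..k})"
    using Min_in[OF finite_imageI[OF finite_atLeastAtMost] ne] by auto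
  have tm: "0 \<le> t m" and wm: "norm (w m) = 1" using m(1) assms(2,3) by auto
  define M where "M i = margin_region (remaining_region w t i) (w i) (t i)" for i
  define Sl where "Sl = {x \<in> (unit_ball :: (real^'n) set). \<bar>w m \<bullet> x\<bar> < t m}"
  have Mb: "M i \<in> sets borel" for i
    unfolding M_def margin_region_def remaining_region_def unit_ball_def by measurable
  have Slb: "Sl \<in> sets borel"
    unfolding Sl_def unit_ball_def by measurable
  have Ub: "(unit_ball :: (real^'n) set) \<in> sets borel" unfolding unit_ball_def by measurable
  have sP: "sets (Px :: (real^'n) measure) = sets borel"
    by (simp add: Px_def)
  have Vc: "emeasure lborel (cball (0::real^'n) 1) = ennreal (unit_ball_vol (real CARD('n)))"
    using emeasure_cball[where c="0::real^'n" and r=1] by simp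
  have Vpos: "unit_ball_vol (real CARD('n)) > 0" by simp
  have fm: "finite_measure (Px :: (real^'n) measure)"
  proof (rule finite_measureI)
    show "emeasure (Px :: (real^'n) measure) (space Px) \<noteq> \<infinity>"
      using Vc Vpos by (simp add: Px_def unit_ball_def divide_ennreal)
  qed
  interpret P: finite_measure "Px :: (real^'n) measure" by (rule fm)
  have cover: "unit_ball \<subseteq> (\<Union>i\<in>{1..k}. M i) \<union> Sl"
  proof
    fix x :: "real^'n" assume xU: "x \<in> unit_ball"
    show "x \<in> (\<Union>i\<in>{1..k}. M i) \<union> Sl"
    proof (cases "\<exists>j. 1 \<le> j \<and> j \<le> k \<and> \<bar>w j \<bullet> x\<bar> \<ge> t j")
      case True
      define i where "i = (LEAST j. 1 \<le> j \<and> j \<le> k \<and> \<bar>w j \<bullet> x\<bar> \<ge> t j)"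
      have i: "1 \<le> i \<and> i \<le> k \<and> \<bar>w i \<bullet> x\<bar> \<ge> t i"
        unfolding i_def by (rule LeastI_ex[OF True])
      have lt: "\<bar>w j \<bullet> x\<bar> < t j" if "j \<in> {1..<i}" for j
      proof (rule ccontr)
        assume "\<not> \<bar>w j \<bullet> x\<bar> < t j"
        then have "1 \<le> j \<and> j \<le> k \<and> \<bar>w j \<bullet> x\<bar> \<ge> t j" using that i by auto
        then have "i \<le> j" unfolding i_def by (rule Least_le)
        then show False using that by auto
      qed
      have "x \<in> M i" unfolding M_def margin_region_def remaining_region_def
        using xU lt i by auto
      then show ?thesis using i by auto
    next
      case False
      then have "\<not> (1 \<le> m \<and> m \<le> k \<and> \<bar>w m \<bullet> x\<bar> \<ge> t m)" by blast
      then have "\<bar>w m \<bullet> x\<bar> < t m" using m(1) by auto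
      then show ?thesis using xU by (auto simp: Sl_def)
    qed
  qed
  have "measure Px (unit_ball :: (real^'n) set) = 1"
  proof -
    have "measure lborel (cball (0::real^'n) 1) = unit_ball_vol (real CARD('n))"
      using Vc Vpos by (simp add: measure_def)
    then show ?thesis using Ub Vpos by (simp add: Px_measure unit_ball_def less_imp_neq[symmetric])
  qed
  moreover have "measure Px (unit_ball :: (real^'n) set) \<le> measure Px ((\<Union>i\<in>{1..k}. M i) \<union> Sl)"
  proof (rule P.finite_measure_mono[OF cover])
    have UMb: "(\<Union>i\<in>{1..k}. M i) \<in> sets borel" by (rule sets.finite_UN) (use Mb in auto)
    show "(\<Union>i\<in>{1..k}. M i) \<union> Sl \<in> sets Px" using UMb Slb sP by simp
  qed
  ultimately have "1 \<le> measure Px ((\<Union>i\<in>{1..k}. M i) \<union> Sl)" by simp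
  also have "\<dots> \<le> measure Px (\<Union>i\<in>{1..k}. M i) + measure Px Sl"
    using Mb Slb sP by (intro measure_Un_le) auto
  also have "measure Px (\<Union>i\<in>{1..k}. M i) \<le> (\<Sum>i=1..k. measure Px (M i))"
    using Mb sP by (intro measure_UNION_le) auto
  also have "measure Px Sl \<le> t m * sqrt (4 * real CARD('n) / pi)"
  proof -
    have eqS: "Sl \<inter> cball 0 1 = {x. norm x \<le> 1 \<and> \<bar>w m \<bullet> x\<bar> < t m}"
      by (auto simp: Sl_def unit_ball_def)
    have "measure Px Sl = measure lborel {x. norm x \<le> 1 \<and> \<bar>w m \<bullet> x\<bar> < t m} / unit_ball_vol (real CARD('n))"
      using Slb by (simp add: Px_measure eqS)
    also have "\<dots> \<le> 2 * t m * unit_ball_vol (real (CARD('n) - 1)) / unit_ball_vol (real CARD('n))"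
      using Vpos slab_measure[OF wm tm] by (intro divide_right_mono) auto
    also have "\<dots> \<le> t m * sqrt (4 * real CARD('n) / pi)"
    proof -
      have "t m * (2 * unit_ball_vol (real (CARD('n) - 1))) \<le> t m * (sqrt (4 * real CARD('n) / pi) * unit_ball_vol (real CARD('n)))"
        using tm ubv_ratio[of "CARD('n)"] by (intro mult_left_mono) auto
      then show ?thesis using Vpos by (simp add: pos_divide_le_eq mult_ac)
    qed
    finally show ?thesis .
  qed
  finally have F: "1 \<le> (\<Sum>i=1..k. measure Px (M i)) + t m * sqrt (4 * real CARD('n) / pi)"
    by simp
  show ?thesis unfolding m(2)[symmetric] using F[unfolded M_def] by linarith
qed

end
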